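(* Let $D\subset\mathbb N^n$ be finite, not contained in any coordinate hyperplane, $p$ a prime, $\ell\ge1$, and let $\mathbf e_{-1},\mathbf e_0,\dots,\mathbf e_{\ell-1}\in\Sigma_p(D)$ (not necessarily distinct) with $\mathbf e_{-1}=\mathbf e_{\ell-1}$ and $V(\mathbf e_i,\mathbf e_{i-1})\ne\emptyset$ for $0\le i\le\ell-1$. For each $i$ choose $V_i=(v_{i\mathbf d})_{\mathbf d}\in V(\mathbf e_i,\mathbf e_{i-1})$. Then $U=(u_{\mathbf d})$ with $u_{\mathbf d}=\sum_{i=0}^{\ell-1}p^iv_{i\mathbf d}$ is a minimal element of $E_{D,p}(\ell)$ whose support satisfies $\varphi_U(i)=\mathbf e_{\ell-1-i}$ for $0\le i\le\ell-1$.
   Context: $s_p$ = base-$p$ digit sum. $E_{D,p}(r)$ = set of $U=(u_{\mathbf d})\in\{0,\dots,p^r-1\}^D$ with $\sum u_{\mathbf d}\mathbf d\equiv0\pmod{p^r-1}$ and all coordinates of $\sum u_{\mathbf d}\mathbf d$ positive; $s_p(U)=\sum s_p(u_{\mathbf d})$; $\delta_p(D)=\frac1{p-1}\min_{r\ge1}\min_{U\in E_{D,p}(r)}s_p(U)/r$; minimal means $s_p(U)=(p-1)r\delta_p(D)$. Shift $\delta_r$: $k\mapsto pk\bmod(p^r-1)$ for $k\le p^r-2$, $p^r-1\mapsto p^r-1$, coordinatewise. $\varphi_U(j)=\frac1{p^r-1}\sum\mathbf d(\delta_r^jU)_{\mathbf d}$ for $j\in\mathbb Z/r\mathbb Z$;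 irreducible means $\varphi_U$ injective; $MI_{D,p}$ = minimal irreducible elements of all lengths; $\Sigma_p(D)=\bigcup_{U\in MI_{D,p}}\mathrm{Im}\varphi_U$. $\psi(U)=(u_{\mathbf d}\bmod p)_{\mathbf d}$; $V(\mathbf e,\mathbf e')=\{\psi(U):U\in MI_{D,p},\varphi_U(-1)=\mathbf e,\varphi_U(0)=\mathbf e'\}$. *)

theory Defs
  imports Complex_Main "HOL-Computational_Algebra.Primes"
begin

text \<open>Exponent vectors d in N^n are functions 'n => nat for a finite index type 'n.
  A tuple U = (u_d)_{d in D} is a function (('n => nat) => nat) vanishing outside D.\<close>

function digit_sum :: "nat \<Rightarrow> nat \<Rightarrow> nat" where
  "digit_sum p k = (if p < 2 \<or> k = 0 then 0 else k mod p + digit_sum p (k div p))"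
  by pat_completeness auto
termination
  by (relation "measure snd") auto

definition sp :: "('n \<Rightarrow> nat) set \<Rightarrow> nat \<Rightarrow> (('n \<Rightarrow> nat) \<Rightarrow> nat) \<Rightarrow> nat" where
  "sp D p U = (\<Sum>d\<in>D. digit_sum p (U d))"

definition wsum :: "('n \<Rightarrow> nat) set \<Rightarrow> (('n \<Rightarrow> nat) \<Rightarrow> nat) \<Rightarrow> 'n \<Rightarrow> nat" where
  "wsum D U i = (\<Sum>d\<in>D. U d * d i)"

definition E :: "('n \<Rightarrow> nat) set \<Rightarrow> nat \<Rightarrow> nat \<Rightarrow> (('n \<Rightarrow> nat) \<Rightarrow> nat) set" where
  "E D p r = {U. (\<forall>d. d \<notin> D \<longrightarrow> U d = 0) \<and> (\<forall>d\<in>D. U d \<le> p ^ r - 1)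
      \<and> (\<forall>i. (p ^ r - 1) dvd wsum D U i) \<and> (\<forall>i. wsum D U i > 0)}"

definition delta :: "('n \<Rightarrow> nat) set \<Rightarrow> nat \<Rightarrow> real" where
  "delta D p = (1 / (real p - 1)) *
     Inf {real (sp D p U) / real r | r U. r \<ge> 1 \<and> U \<in> E D p r}"

definition minimal :: "('n \<Rightarrow> nat) set \<Rightarrow> nat \<Rightarrow> nat \<Rightarrow> (('n \<Rightarrow> nat) \<Rightarrow> nat) \<Rightarrow> bool" where
  "minimal D p r U \<longleftrightarrow> r \<ge> 1 \<and> U \<in> E D p r \<and>
     real (sp D p U) = (real p - 1) * real r * delta D p"

definition shift1 :: "nat \<Rightarrow> nat \<Rightarrow> nat \<Rightarrow> nat" where
  "shift1 p r k = (if k = p ^ r - 1 then p ^ r - 1 else (p * k) mod (p ^ r - 1))"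

definition shift :: "nat \<Rightarrow> nat \<Rightarrow> (('n \<Rightarrow> nat) \<Rightarrow> nat) \<Rightarrow> (('n \<Rightarrow> nat) \<Rightarrow> nat)" where
  "shift p r U = (\<lambda>d. shift1 p r (U d))"

text \<open>phi_U(j), for j in Z/rZ represented by j mod r.\<close>
definition phi :: "('n \<Rightarrow> nat) set \<Rightarrow> nat \<Rightarrow> nat \<Rightarrow> (('n \<Rightarrow> nat) \<Rightarrow> nat) \<Rightarrow> int \<Rightarrow> ('n \<Rightarrow> nat)" where
  "phi D p r U j = (\<lambda>i. wsum D ((shift p r ^^ nat (j mod int r)) U) i div (p ^ r - 1))"

definition irreducible_elt :: "('n \<Rightarrow> nat) set \<Rightarrow> nat \<Rightarrow> nat \<Rightarrow> (('n \<Rightarrow> nat) \<Rightarrow> nat) \<Rightarrow> bool" where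
  "irreducible_elt D p r U \<longleftrightarrow> inj_on (phi D p r U) {0..<int r}"

definition MI :: "('n \<Rightarrow> nat) set \<Rightarrow> nat \<Rightarrow> (nat \<times> (('n \<Rightarrow> nat) \<Rightarrow> nat)) set" where
  "MI D p = {(r, U). minimal D p r U \<and> irreducible_elt D p r U}"

definition Sigma_p :: "('n \<Rightarrow> nat) set \<Rightarrow> nat \<Rightarrow> ('n \<Rightarrow> nat) set" where
  "Sigma_p D p = (\<Union>(r, U)\<in>MI D p. phi D p r U ` {0..<int r})"

definition psi :: "nat \<Rightarrow> (('n \<Rightarrow> nat) \<Rightarrow> nat) \<Rightarrow> (('n \<Rightarrow> nat) \<Rightarrow> nat)" where
  "psi p U = (\<lambda>d. U d mod p)"

definition V :: "('n \<Rightarrow> nat) set \<Rightarrow> nat \<Rightarrow> ('n \<Rightarrow> nat) \<Rightarrow> ('n \<Rightarrow> nat) \<Rightarrow> (('n \<Rightarrow> nat) \<Rightarrow> nat) set" where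
  "V D p e e' = {psi p U | r U. (r, U) \<in> MI D p \<and> phi D p r U (-1) = e \<and> phi D p r U 0 = e'}"

end

theory Submission imports Defs begin

declare digit_sum.simps[simp del]

lemma divmod_split:
  fixes r m q :: nat assumes "r < m"
  shows "(r + m * q) div m = q" "(r + m * q) mod m = r"
  using assms by auto

lemma rot1:
  assumes p: "p \<ge> 2" and l: "l \<ge> 1" and x: "x \<le> p ^ l - 1"
  shows "shift1 p l x = p * (x mod p ^ (l - 1)) + x div p ^ (l - 1)"
proof -
  define P where "P = p ^ (l - 1)"
  have pl: "p ^ l = p * P" using l by (simp add: P_def power_eq_if)
  have P1: "P \<ge> 1" using p by (simp add: P_def)
  define a where "a = x mod P"
  define t where "t = x div P"
  have xa: "x = a + P * t" by (simp add: a_def t_def)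
  have "a < P" using P1 by (simp add: a_def)
  then have aP: "a \<le> P - 1" by simp
  have tp: "t \<le> p - 1"
  proof -
    have "p * P > 0" using p P1 by simp
    then have "x < p * P" using x pl by linarith
    then have "x < P * p" by (simp add: mult.commute)
    then have "t < p" unfolding t_def using P1 by (simp add: div_less_iff_less_mult mult.commute)
    then show ?thesis by simp
  qed
  show ?thesis
  proof (cases "x = p ^ l - 1")
    case True
    have "x = (P - 1) + P * (p - 1)" using True pl P1 p
      by (simp add: algebra_simps diff_mult_distrib2)
    then have "t = p - 1" "a = P - 1" using xa divmod_split[of "P - 1" P "p - 1"] P1
      unfolding a_def t_def by auto
    then show ?thesis using True pl P1 p unfolding shift1_def P_def[symmetric] a_def[symmetric] t_def[symmetric]
      by (simp add: algebra_simps diff_mult_distrib2)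
  next
    case False
    have e1: "(p * P - 1) * t = p * P * t - t" by (simp add: diff_mult_distrib)
    have e2: "t \<le> p * P * t" using P1 p by simp
    have e3: "p * x = p * a + p * P * t" using xa by (simp add: algebra_simps)
    have px: "p * x = (p * a + t) + (p * P - 1) * t" using e1 e2 e3 by linarith
    have le1: "p * a \<le> p * (P - 1)" using aP by simp
    have lt: "p * a + t < p * P - 1"
    proof (rule ccontr)
      assume "\<not> ?thesis"
      moreover have "p * (P - 1) + (p - 1) = p * P - 1" using p P1
        by (simp add: algebra_simps diff_mult_distrib2)
      ultimately have "p * a = p * (P - 1)" "t = p - 1" using le1 tp by linarith+
      then have "a = P - 1" using p by simp
      then have "x = p ^ l - 1" using xa \<open>t = p - 1\<close> pl P1 p
        by (simp add: algebra_simps diff_mult_distrib2)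
      then show False using False by simp
    qed
    have "shift1 p l x = (p * x) mod (p * P - 1)" using False pl by (simp add: shift1_def)
    also have "\<dots> = p * a + t" unfolding px using divmod_split(2)[OF lt] by simp
    finally show ?thesis by (simp add: a_def t_def P_def)
  qed
qed

lemma rotj:
  assumes p: "p \<ge> 2" and l: "l \<ge> 1" and x: "x \<le> p ^ l - 1"
  shows "j \<le> l \<Longrightarrow> (shift1 p l ^^ j) x = (x mod p ^ (l - j)) * p ^ j + x div p ^ (l - j)"
proof (induction j)
  case 0
  have "p ^ l > 0" using p by simp
  then have "x < p ^ l" using x by linarith
  then show ?case by simp
next
  case (Suc j)
  define k where "k = l - j"
  have k1: "k \<ge> 1" using Suc.prems by (simp add: k_def)
  have lk: "l = k + j" using Suc.prems by (simp add: k_def)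
  define a where "a = x mod p ^ k"
  define b where "b = x div p ^ k"
  define a' where "a' = a mod p ^ (k - 1)"
  define t where "t = a div p ^ (k - 1)"
  define Q where "Q = p ^ (k - 1)"
  have pk: "p ^ k = p * Q" using k1 by (simp add: Q_def power_eq_if)
  have Q1: "Q \<ge> 1" using p by (simp add: Q_def)
  have pj: "p ^ j \<ge> 1" using p by simp
  have "p ^ l > 0" using p by simp
  then have xl: "x < p ^ l" using x by linarith
  have IH: "(shift1 p l ^^ j) x = a * p ^ j + b" using Suc by (simp add: a_def b_def k_def)
  have xab: "x = a + p ^ k * b" by (simp add: a_def b_def)
  have bj: "b < p ^ j"
    using xl unfolding b_def lk power_add using p by (simp add: div_less_iff_less_mult mult.commute)
  have aa: "a = a' + Q * t" by (simp add: a'_def t_def Q_def)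
  have a'Q: "a' < Q" unfolding a'_def Q_def[symmetric] using Q1 by (intro mod_less_divisor) simp
  have tp: "t < p"
  proof -
    have "a < p ^ k" using p by (simp add: a_def)
    then show ?thesis unfolding t_def Q_def[symmetric] pk using Q1 by (simp add: div_less_iff_less_mult mult.commute)
  qed
  have low: "a' * p ^ j + b < Q * p ^ j"
  proof -
    have "a' * p ^ j + b < a' * p ^ j + p ^ j" using bj by simp
    also have "\<dots> = (a' + 1) * p ^ j" by simp
    also have "\<dots> \<le> Q * p ^ j" using a'Q by (intro mult_right_mono) auto
    finally show ?thesis .
  qed
  have pl1: "p ^ (l - 1) = Q * p ^ j" using k1 by (simp add: Q_def lk power_add[symmetric])
  have y: "a * p ^ j + b = (a' * p ^ j + b) + p ^ (l - 1) * t" unfolding aa pl1 by (simp add: algebra_simps)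
  have ybound: "a * p ^ j + b \<le> p ^ l - 1"
  proof -
    have "a * p ^ j + b < Q * p ^ j + Q * p ^ j * t" using low y pl1 by simp
    also have "\<dots> = Q * p ^ j * (t + 1)" by (simp add: algebra_simps)
    also have "\<dots> \<le> Q * p ^ j * p" using tp by (intro mult_left_mono) auto
    also have "\<dots> = p ^ l" unfolding lk power_add pk by (simp add: algebra_simps)
    finally show ?thesis by simp
  qed
  have "(shift1 p l ^^ Suc j) x = shift1 p l (a * p ^ j + b)" using IH by simp
  also have "\<dots> = p * ((a * p ^ j + b) mod p ^ (l - 1)) + (a * p ^ j + b) div p ^ (l - 1)"
    by (rule rot1[OF p l ybound])
  also have "\<dots> = p * (a' * p ^ j + b) + t"
    unfolding y using divmod_split[OF low[folded pl1], of t] by simp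
  finally have L: "(shift1 p l ^^ Suc j) x = p * (a' * p ^ j + b) + t" .
  have m1: "x mod Q = a'"
  proof -
    have "Q dvd p ^ k" unfolding pk by simp
    then show ?thesis unfolding a'_def a_def Q_def[symmetric] by (simp add: mod_mod_cancel)
  qed
  have m2: "x div Q = t + p * b"
  proof -
    have "x = a' + Q * (t + p * b)" using xab aa pk by (simp add: algebra_simps)
    then show ?thesis using divmod_split(1)[OF a'Q, of "t + p * b"] by simp
  qed
  have lsj: "l - Suc j = k - 1" by (simp add: k_def)
  show ?case unfolding L lsj Q_def[symmetric] m1 m2 by (simp add: algebra_simps)
qed

lemma ds_unfold: "p \<ge> 2 \<Longrightarrow> digit_sum p k = k mod p + digit_sum p (k div p)"
  by (cases "k = 0") (simp_all add: digit_sum.simps[of p k] digit_sum.simps[of p 0])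

lemma ds_concat:
  assumes p: "p \<ge> 2"
  shows "b < p ^ m \<Longrightarrow> digit_sum p (b + p ^ m * a) = digit_sum p b + digit_sum p a"
proof (induction m arbitrary: b)
  case 0
  then have "b = 0" by simp
  then show ?case by (simp add: digit_sum.simps[of p 0])
next
  case (Suc m)
  have bm: "b div p < p ^ m" using Suc.prems p by (simp add: div_less_iff_less_mult mult.commute)
  have e1: "(b + p ^ Suc m * a) mod p = b mod p" by (simp add: mult.assoc)
  have e2: "(b + p ^ Suc m * a) div p = b div p + p ^ m * a" using p by (simp add: mult.assoc)
  show ?case
    using ds_unfold[OF p, of "b + p ^ Suc m * a"] ds_unfold[OF p, of b] e1 e2 Suc.IH[OF bm] by simp
qed

lemma sp_concat:
  assumes p: "p \<ge> 2" and "\<forall>d\<in>D. Y d < p ^ m"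
  shows "sp D p (\<lambda>d. Y d + p ^ m * X d) = sp D p Y + sp D p X"
  unfolding sp_def using assms by (simp add: ds_concat sum.distrib)

lemma wsum_lin: "wsum D (\<lambda>d. X d + c * Y d) i = wsum D X i + c * wsum D Y i"
  unfolding wsum_def by (simp add: sum.distrib sum_distrib_left algebra_simps)

lemma wsum_cong: "(\<And>d. d \<in> D \<Longrightarrow> X d = Y d) \<Longrightarrow> wsum D X i = wsum D Y i"
  unfolding wsum_def by (rule sum.cong) auto

lemma shift_pow: "(shift p r ^^ j) U = (\<lambda>d. (shift1 p r ^^ j) (U d))"
  by (induction j) (auto simp: shift_def)

lemma edge:
  fixes U :: "('n \<Rightarrow> nat) \<Rightarrow> nat"
  assumes p: "p \<ge> 2" and r: "r \<ge> 1" and UE: "U \<in> E D p r"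
  shows "wsum D (psi p U) i + phi D p r U 0 i = p * phi D p r U (-1) i"
    "wsum D (\<lambda>d. U d div p) i + phi D p r U (-1) i = p ^ (r - 1) * phi D p r U 0 i"
    "sp D p U = sp D p (psi p U) + sp D p (\<lambda>d. U d div p)"
    "\<forall>d\<in>D. U d div p < p ^ (r - 1)"
    "phi D p r U 0 i > 0"
proof -
  define N where "N = p ^ r - 1"
  define V where "V = psi p U"
  define T where "T = (\<lambda>d. U d div p)"
  define a where "a = phi D p r U 0 i"
  define b where "b = phi D p r U (-1) i"
  have pr: "p ^ r = N + 1" using p by (simp add: N_def)
  have "p ^ 1 \<le> p ^ r" using p r by (intro power_increasing) auto
  then have N0: "N > 0" using p unfolding N_def by simp
  have Ub: "\<forall>d\<in>D. U d \<le> N" and Udv: "N dvd wsum D U i" and Upos: "wsum D U i > 0"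
    using UE by (auto simp: E_def N_def)
  have a_eq: "a = wsum D U i div N" by (simp add: a_def phi_def N_def)
  have wU: "wsum D U i = N * a" using Udv a_eq by simp
  show "a > 0" using wU Upos by (cases "a = 0") auto
  have UVT: "\<And>d. U d = V d + p * T d" by (simp add: V_def T_def psi_def)
  have wsplit: "wsum D U i = wsum D V i + p * wsum D T i"
    by (subst wsum_lin[symmetric]) (rule wsum_cong, simp add: UVT[symmetric])
  have m1: "nat ((-1) mod int r) = r - 1" using r by (simp add: zmod_minus1 nat_diff_distrib)
  define m where "m = r - 1"
  have rot: "\<And>d. d \<in> D \<Longrightarrow> (shift1 p r ^^ m) (U d) = T d + p ^ m * V d"
  proof -
    fix d assume "d \<in> D"
    then have "U d \<le> p ^ r - 1" using Ub N_def by simp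
    from rotj[OF p r this, of "r - 1"] have "(shift1 p r ^^ (r - 1)) (U d) = U d mod p * p ^ (r - 1) + U d div p"
      using r by simp
    then show "(shift1 p r ^^ m) (U d) = T d + p ^ m * V d" by (simp add: T_def V_def psi_def m_def)
  qed
  define X where "X = wsum D ((shift p r ^^ m) U) i"
  have b_eq: "b = X div N" by (simp add: b_def X_def phi_def N_def m1 m_def)
  have X_eq: "X = wsum D T i + p ^ m * wsum D V i"
    unfolding X_def shift_pow by (subst wsum_lin[symmetric]) (rule wsum_cong, simp add: rot)
  have pX: "p * X = N * (a + wsum D V i)"
  proof -
    have "p * X = p * wsum D T i + p ^ r * wsum D V i" unfolding X_eq using r
      by (simp add: algebra_simps power_eq_if m_def)
    also have "\<dots> = wsum D U i + N * wsum D V i" unfolding wsplit pr by (simp add: algebra_simps)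
    finally show ?thesis unfolding wU by (simp add: algebra_simps)
  qed
  have cop: "coprime N p"
  proof -
    have "coprime (p ^ r - 1) (p ^ r)" using p by (intro coprime_diff_one_left_nat) simp
    then show ?thesis using r by (simp add: N_def)
  qed
  have "N dvd p * X" unfolding pX by simp
  then have "N dvd X" using cop by (simp add: coprime_dvd_mult_right_iff)
  then have XN: "X = N * b" using b_eq by simp
  have "N * (p * b) = N * (a + wsum D V i)" using pX XN by (simp add: algebra_simps)
  then have eb: "p * b = a + wsum D V i" using N0 by simp
  then show "wsum D (psi p U) i + a = p * b" by (simp add: V_def)
  have "p * (wsum D T i + b) = p * wsum D T i + p * b" by (simp add: algebra_simps)
  also have "\<dots> = wsum D U i + a" using wsplit eb by simp
  also have "\<dots> = p ^ r * a" unfolding wU pr by (simp add: algebra_simps)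
  also have "\<dots> = p * (p ^ (r - 1) * a)" using r by (simp add: power_eq_if)
  finally show "wsum D (\<lambda>d. U d div p) i + b = p ^ (r - 1) * a" using p by (simp add: T_def)
  show "sp D p U = sp D p (psi p U) + sp D p (\<lambda>d. U d div p)"
  proof -
    have "U = (\<lambda>d. V d + p ^ 1 * T d)" using UVT by (simp add: fun_eq_iff)
    then have "sp D p U = sp D p (\<lambda>d. V d + p ^ 1 * T d)" by simp
    also have "\<dots> = sp D p V + sp D p T" using p by (intro sp_concat) (auto simp: V_def psi_def)
    finally show ?thesis by (simp add: V_def T_def)
  qed
  show "\<forall>d\<in>D. U d div p < p ^ (r - 1)"
  proof
    fix d assume "d \<in> D"
    then have "U d \<le> N" using Ub by blast
    then have "U d < p ^ r" using pr by linarith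
    moreover have "p ^ r = p * p ^ (r - 1)" using r by (simp add: power_eq_if)
    ultimately have "U d < p * p ^ (r - 1)" by simp
    then show "U d div p < p ^ (r - 1)" using p by (simp add: div_less_iff_less_mult mult.commute)
  qed
qed

lemma concat_bound:
  fixes p :: nat
  assumes "x < p ^ a" "y < p ^ b"
  shows "x + p ^ a * y < p ^ (a + b)"
proof -
  have "x + p ^ a * y < p ^ a + p ^ a * y" using assms(1) by simp
  also have "\<dots> = p ^ a * (y + 1)" by (simp add: algebra_simps)
  also have "\<dots> \<le> p ^ a * p ^ b" using assms(2) by (intro mult_left_mono) auto
  finally show ?thesis by (simp add: power_add)
qed

primrec catU :: "nat \<Rightarrow> (nat \<Rightarrow> nat) \<Rightarrow> (nat \<Rightarrow> 'a \<Rightarrow> nat) \<Rightarrow> nat \<Rightarrow> 'a \<Rightarrow> nat" where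
  "catU p m T 0 = (\<lambda>d. 0)"
| "catU p m T (Suc k) = (\<lambda>d. T k d + p ^ m k * catU p m T k d)"

lemma Inf_props:
  fixes D :: "('n \<Rightarrow> nat) set"
  assumes p: "p \<ge> 2"
  shows "real p - 1 > 0"
    "(real p - 1) * delta D p = Inf {real (sp D p U) / real r | r U. r \<ge> 1 \<and> U \<in> E D p r}"
    "r \<ge> 1 \<Longrightarrow> U \<in> E D p r \<Longrightarrow>
       real r * ((real p - 1) * delta D p) \<le> real (sp D p U)"
proof -
  show pp: "real p - 1 > 0" using p by simp
  show eq: "(real p - 1) * delta D p = Inf {real (sp D p U) / real r | r U. r \<ge> 1 \<and> U \<in> E D p r}"
    using pp by (simp add: delta_def)
  assume r: "r \<ge> 1" and U: "U \<in> E D p r"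
  have bdd: "bdd_below {real (sp D p U) / real r | r U. r \<ge> 1 \<and> U \<in> E D p r}"
    by (rule bdd_belowI[of _ 0]) auto
  have "Inf {real (sp D p U) / real r | r U. r \<ge> 1 \<and> U \<in> E D p r} \<le> real (sp D p U) / real r"
    using r U by (intro cInf_lower[OF _ bdd]) blast
  then show "real r * ((real p - 1) * delta D p) \<le> real (sp D p U)"
    unfolding eq using r by (simp add: field_simps)
qed

theorem corollary2p17:
  fixes D :: "('n::finite \<Rightarrow> nat) set" and p l :: nat
    and e :: "int \<Rightarrow> ('n \<Rightarrow> nat)" and Vs :: "nat \<Rightarrow> (('n \<Rightarrow> nat) \<Rightarrow> nat)"
  assumes "finite D"
    and "\<forall>i. \<exists>d\<in>D. d i \<noteq> 0"
    and "prime p"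
    and "l \<ge> 1"
    and "\<forall>i\<in>{-1..int l - 1}. e i \<in> Sigma_p D p"
    and "e (-1) = e (int l - 1)"
    and "\<forall>i\<in>{0..int l - 1}. V D p (e i) (e (i - 1)) \<noteq> {}"
    and "\<forall>i<l. Vs i \<in> V D p (e (int i)) (e (int i - 1))"
  shows "minimal D p l (\<lambda>d. \<Sum>i<l. p ^ i * Vs i d)
    \<and> (\<forall>i\<in>{0..int l - 1}. phi D p l (\<lambda>d. \<Sum>i<l. p ^ i * Vs i d) i = e (int l - 1 - i))"
proof -
  have p: "p \<ge> 2" using assms(3) by (simp add: prime_ge_2_nat)
  have l: "l \<ge> 1" by (rule assms(4))
  have ee: "e (-1) = e (int l - 1)" by (rule assms(6))
  have "\<forall>i<l. \<exists>rU. Vs i = psi p (snd rU) \<and> rU \<in> MI D p \<and> phi D p (fst rU) (snd rU) (-1) = e (int i)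
      \<and> phi D p (fst rU) (snd rU) 0 = e (int i - 1)"
    using assms(8) unfolding V_def by fastforce
  then obtain f where f: "\<And>i. i < l \<Longrightarrow> Vs i = psi p (snd (f i)) \<and> f i \<in> MI D p
      \<and> phi D p (fst (f i)) (snd (f i)) (-1) = e (int i) \<and> phi D p (fst (f i)) (snd (f i)) 0 = e (int i - 1)"
    by metis
  define rr where "rr i = fst (f i)" for i
  define Uf where "Uf i = snd (f i)" for i
  define T where "T i = (\<lambda>d. Uf i d div p)" for i
  define mm where "mm i = rr i - 1" for i
  define Del where "Del = (real p - 1) * delta D p"
  have fi: "Vs i = psi p (Uf i)" "rr i \<ge> 1" "Uf i \<in> E D p (rr i)"
     "real (sp D p (Uf i)) = real (rr i) * Del"
     "phi D p (rr i) (Uf i) (-1) = e (int i)" "phi D p (rr i) (Uf i) 0 = e (int i - 1)"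
    if "i < l" for i
    using f[OF that] unfolding rr_def Uf_def MI_def minimal_def Del_def by auto
  have E1: "wsum D (Vs i) x + e (int i - 1) x = p * e (int i) x"
    and E2: "wsum D (T i) x + e (int i) x = p ^ mm i * e (int i - 1) x"
    and E3: "sp D p (Uf i) = sp D p (Vs i) + sp D p (T i)"
    and E5: "e (int i - 1) x > 0"
    if "i < l" for i x
    using edge(1,2,5)[OF p fi(2)[OF that] fi(3)[OF that], of x] edge(3)[OF p fi(2)[OF that] fi(3)[OF that]] fi[OF that]
    by (auto simp: T_def mm_def)
  have E4: "T i d < p ^ mm i" if "i < l" for i d
  proof (cases "d \<in> D")
    case True
    then show ?thesis using edge(4)[OF p fi(2)[OF that] fi(3)[OF that]] by (auto simp: T_def mm_def)
  next
    case False
    then have "Uf i d = 0" using fi(3)[OF that] by (auto simp: E_def)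
    then show ?thesis using p by (simp add: T_def)
  qed
  have Tz: "T i d = 0" if "i < l" "d \<notin> D" for i d
    using fi(3)[OF that(1)] that(2) by (auto simp: E_def T_def)
  have Vlt: "Vs i d < p" if "i < l" for i d
    using fi(1)[OF that] p by (simp add: psi_def)
  have Vz: "Vs i d = 0" if "i < l" "d \<notin> D" for i d
    using fi(1)[OF that(1)] fi(3)[OF that(1)] that(2) by (auto simp: E_def psi_def)

  define Ua where "Ua m = (\<lambda>d. \<Sum>j<m. p ^ j * Vs j d)" for m
  have Ua_Suc: "Ua (Suc m) = (\<lambda>d. Ua m d + p ^ m * Vs m d)" for m
    by (simp add: Ua_def fun_eq_iff)
  have UaB: "m \<le> l \<Longrightarrow> Ua m d < p ^ m" for m d
  proof (induction m)
    case 0 then show ?case by (simp add: Ua_def)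
  next
    case (Suc m)
    then show ?case unfolding Ua_Suc using concat_bound[of "Ua m d" p m "Vs m d" 1] Vlt[of m d] by simp
  qed
  have Ua_w: "m \<le> l \<Longrightarrow> wsum D (Ua m) x + e (-1) x = p ^ m * e (int m - 1) x" for m x
  proof (induction m)
    case 0 then show ?case by (simp add: Ua_def wsum_def)
  next
    case (Suc m)
    have "wsum D (Ua (Suc m)) x + e (-1) x = (wsum D (Ua m) x + e (-1) x) + p ^ m * wsum D (Vs m) x"
      unfolding Ua_Suc wsum_lin by simp
    also have "\<dots> = p ^ m * (e (int m - 1) x + wsum D (Vs m) x)" using Suc by (simp add: algebra_simps)
    also have "\<dots> = p ^ Suc m * e (int (Suc m) - 1) x" using E1[of m x] Suc.prems by (simp add: algebra_simps)
    finally show ?case .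
  qed
  have Ua_sp: "m \<le> l \<Longrightarrow> sp D p (Ua m) = (\<Sum>j<m. sp D p (Vs j))" for m
  proof (induction m)
    case 0 then show ?case by (simp add: Ua_def sp_def digit_sum.simps[of p 0])
  next
    case (Suc m)
    have "sp D p (Ua (Suc m)) = sp D p (Ua m) + sp D p (Vs m)"
      unfolding Ua_Suc using Suc.prems UaB by (intro sp_concat[OF p]) auto
    then show ?case using Suc by simp
  qed
  have Ua_z: "Ua m d = 0" if "m \<le> l" "d \<notin> D" for m d
    using that Vz by (auto simp: Ua_def)
  have Ua_mod: "k \<le> m \<Longrightarrow> m \<le> l \<Longrightarrow> Ua m d mod p ^ k = Ua k d" for k m d
  proof (induction m)
    case 0 then show ?case by (simp add: Ua_def)
  next
    case (Suc m)
    show ?case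
    proof (cases "k = Suc m")
      case True
      then show ?thesis using UaB[of "Suc m" d] Suc.prems by simp
    next
      case False
      then have km: "k \<le> m" using Suc.prems by simp
      have "p ^ k dvd p ^ m" using km by (simp add: le_imp_power_dvd)
      then have "(Ua m d + p ^ m * Vs m d) mod p ^ k = Ua m d mod p ^ k"
        by (metis dvd_def mod_mult_self2 mult.assoc mult.commute)
      then show ?thesis unfolding Ua_Suc using Suc.IH km Suc.prems by simp
    qed
  qed

  define C where "C = catU p mm T"
  define M where "M k = (\<Sum>i<k. mm i)" for k
  have CB: "k \<le> l \<Longrightarrow> C k d < p ^ M k" for k d
  proof (induction k)
    case 0 then show ?case by (simp add: C_def M_def)
  next
    case (Suc k)
    then have "T k d + p ^ mm k * C k d < p ^ (mm k + M k)"
      using E4[of k d] by (intro concat_bound) auto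
    then show ?case by (simp add: C_def M_def add.commute)
  qed
  have C_w: "k \<le> l \<Longrightarrow> wsum D (C k) x + e (int k - 1) x = p ^ M k * e (-1) x" for k x
  proof (induction k)
    case 0 then show ?case by (simp add: C_def M_def wsum_def)
  next
    case (Suc k)
    have "wsum D (C (Suc k)) x + e (int (Suc k) - 1) x = (wsum D (T k) x + e (int k) x) + p ^ mm k * wsum D (C k) x"
      unfolding C_def catU.simps wsum_lin by simp
    also have "\<dots> = p ^ mm k * (wsum D (C k) x + e (int k - 1) x)"
      using E2[of k x] Suc.prems by (simp add: algebra_simps)
    also have "\<dots> = p ^ M (Suc k) * e (-1) x" using Suc by (simp add: M_def power_add)
    finally show ?case .
  qed
  have C_sp: "k \<le> l \<Longrightarrow> sp D p (C k) = (\<Sum>i<k. sp D p (T i))" for k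
  proof (induction k)
    case 0 then show ?case by (simp add: C_def sp_def digit_sum.simps[of p 0])
  next
    case (Suc k)
    have "sp D p (C (Suc k)) = sp D p (T k) + sp D p (C k)"
      unfolding C_def catU.simps using Suc.prems E4 by (intro sp_concat[OF p]) auto
    then show ?case using Suc by simp
  qed
  have C_z: "k \<le> l \<Longrightarrow> d \<notin> D \<Longrightarrow> C k d = 0" for k d
    by (induction k) (auto simp: C_def Tz)

  define U where "U = (\<lambda>d. \<Sum>i<l. p ^ i * Vs i d)"
  have U_Ua: "U = Ua l" by (simp add: U_def Ua_def)
  have pl0: "p ^ l - 1 > 0"
  proof -
    have "p ^ 1 \<le> p ^ l" using p l by (intro power_increasing) auto
    then show ?thesis using p by simp
  qed
  have epos: "e (-1) x > 0" for x using E5[of 0 x] l by simp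
  have Uw: "wsum D U x = (p ^ l - 1) * e (-1) x" for x
    using Ua_w[of l x] ee unfolding U_Ua by (simp add: diff_mult_distrib)
  have UE: "U \<in> E D p l"
    unfolding E_def
  proof (intro CollectI conjI allI impI ballI)
    fix d :: "'n \<Rightarrow> nat" assume "d \<notin> D" then show "U d = 0" using Ua_z U_Ua by simp
  next
    fix d :: "'n \<Rightarrow> nat" show "U d \<le> p ^ l - 1" using UaB[of l d] U_Ua by simp
  next
    fix x show "(p ^ l - 1) dvd wsum D U x" using Uw by simp
  next
    fix x show "wsum D U x > 0" using Uw pl0 epos[of x] by simp
  qed
  have lowU: "real l * Del \<le> real (sp D p U)"
    using Inf_props(3)[OF p l UE] by (simp add: Del_def)
  have lowC: "real (M l) * Del \<le> real (sp D p (C l))"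
  proof (cases "M l = 0")
    case True then show ?thesis by simp
  next
    case False
    have Cw: "wsum D (C l) x = (p ^ M l - 1) * e (-1) x" for x
      using C_w[of l x] ee by (simp add: diff_mult_distrib)
    have pM: "p ^ M l - 1 > 0"
    proof -
      have "p ^ 1 \<le> p ^ M l" using p False by (intro power_increasing) auto
      then show ?thesis using p by simp
    qed
    have CE: "C l \<in> E D p (M l)"
      unfolding E_def
    proof (intro CollectI conjI allI impI ballI)
      fix d :: "'n \<Rightarrow> nat" assume "d \<notin> D" then show "C l d = 0" using C_z by simp
    next
      fix d :: "'n \<Rightarrow> nat" show "C l d \<le> p ^ M l - 1" using CB[of l d] by simp
    next
      fix x show "(p ^ M l - 1) dvd wsum D (C l) x" using Cw by simp
    next
      fix x show "wsum D (C l) x > 0" using Cw pM epos[of x] by simp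
    qed
    show ?thesis using Inf_props(3)[OF p _ CE] False by (simp add: Del_def)
  qed
  have sumr: "real (\<Sum>i<l. rr i) = real (M l) + real l"
  proof -
    have "(\<Sum>i<l. rr i) = (\<Sum>i<l. mm i + 1)"
    proof (intro sum.cong refl)
      fix i assume "i \<in> {..<l}"
      then have "rr i \<ge> 1" using fi(2) by simp
      then show "rr i = mm i + 1" by (simp add: mm_def)
    qed
    then show ?thesis by (simp add: M_def sum.distrib)
  qed
  have sumsp: "real (sp D p U) + real (sp D p (C l)) = real (\<Sum>i<l. rr i) * Del"
  proof -
    have "sp D p U + sp D p (C l) = (\<Sum>i<l. sp D p (Uf i))"
      unfolding U_Ua Ua_sp[OF order_refl] C_sp[OF order_refl] using E3 by (simp add: sum.distrib)
    then have "real (sp D p U) + real (sp D p (C l)) = (\<Sum>i<l. real (sp D p (Uf i)))"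
      by (metis of_nat_add of_nat_sum)
    also have "\<dots> = (\<Sum>i<l. real (rr i) * Del)" using fi(4) by (intro sum.cong) auto
    finally show ?thesis by (simp add: sum_distrib_right)
  qed
  have spU: "real (sp D p U) = real l * Del"
    using lowU lowC sumsp sumr by (simp add: algebra_simps)
  have part1: "minimal D p l U"
    unfolding minimal_def using l UE spU by (simp add: Del_def algebra_simps)
  have part2: "phi D p l U j = e (int l - 1 - j)" if j: "j \<in> {0..int l - 1}" for j
  proof -
    define jj where "jj = nat j"
    define k where "k = l - jj"
    have jjl: "jj < l" using j by (auto simp: jj_def)
    have kl: "k \<le> l" "l = k + jj" using jjl by (auto simp: k_def)
    have jm: "nat (j mod int l) = jj" using j by (simp add: jj_def)
    have ek: "int k - 1 = int l - 1 - j" using j jjl by (simp add: k_def jj_def)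
    define B where "B d = U d div p ^ k" for d
    have rot: "(shift1 p l ^^ jj) (U d) = B d + p ^ jj * Ua k d" if "d \<in> D" for d
    proof -
      have "U d \<le> p ^ l - 1" using UE that by (auto simp: E_def)
      from rotj[OF p l this, of jj] jjl have "(shift1 p l ^^ jj) (U d) = (U d mod p ^ k) * p ^ jj + U d div p ^ k"
        by (simp add: k_def)
      then show ?thesis using Ua_mod[of k l d] kl by (simp add: U_Ua B_def)
    qed
    show ?thesis
    proof (rule ext)
    fix x
    define A where "A = wsum D (Ua k) x"
    define Bw where "Bw = wsum D B x"
    define E0 where "E0 = e (-1) x"
    define Ek where "Ek = e (int k - 1) x"
    define P where "P = p ^ k"
    define Q where "Q = p ^ jj"
    have P0: "P > 0" using p by (simp add: P_def)
    have pl: "p ^ l = P * Q" by (simp add: P_def Q_def kl(2) power_add)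
    have h1: "A + E0 = P * Ek" using Ua_w[OF kl(1), of x] by (simp add: A_def E0_def Ek_def P_def)
    have Ud: "U d = Ua k d + P * B d" for d
      using Ua_mod[OF kl(1) order_refl, of d] by (simp add: B_def P_def U_Ua) (metis mod_mult_div_eq)
    have h2: "wsum D U x = A + P * Bw"
      unfolding A_def Bw_def by (subst wsum_lin[symmetric]) (rule wsum_cong, simp add: Ud)
    have h3: "wsum D U x + E0 = P * Q * E0" using Ua_w[OF order_refl, of x] ee
      by (simp add: U_Ua E0_def pl)
    have "P * (Ek + Bw) = P * (Q * E0)" using h1 h2 h3 by (simp add: algebra_simps)
    then have h4: "Ek + Bw = Q * E0" using P0 by simp
    define R where "R = wsum D ((shift p l ^^ jj) U) x"
    have hR: "R = Bw + Q * A"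
      unfolding R_def shift_pow Bw_def A_def Q_def by (subst wsum_lin[symmetric]) (rule wsum_cong, simp add: rot)
    have "R + Ek = Q * (A + E0)" using hR h4 by (simp add: algebra_simps)
    then have "R + Ek = p ^ l * Ek" using h1 pl by (simp add: algebra_simps)
    then have "R = (p ^ l - 1) * Ek" by (simp add: diff_mult_distrib)
    then have "R div (p ^ l - 1) = Ek" using pl0 by simp
    then show "phi D p l U j x = e (int l - 1 - j) x"
      unfolding phi_def jm R_def[symmetric] Ek_def ek .
    qed
  qed
  show ?thesis using part1 part2 unfolding U_def by blast
qed

end
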